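(* Let $f_1,\dots,f_n$ be nondecreasing linear functions at least one of which is constant, let $\beta_{\min}=\min\{\beta(f_i)\mid\alpha(f_i)=0\}$, and let $\sigma$ be a locally optimal permutation. Let $q_\sigma=\max\{q\in[n]\mid\alpha(f_{\sigma(q)})=0\}$; note $f^\sigma$ is a constant function, identified with its value. Then: (i) $f^\sigma\le\beta_{\min}$; (ii) $f_{\sigma(q_\sigma)}$ is the constant function with value $\beta_{\min}$; (iii) $\theta(f_{\sigma(i)})\in[\theta(f^\sigma)-\pi,\theta(\beta_{\min})]_{2\pi}\cup\{\bot\}$ for every $i\in[q_\sigma]$; (iv) $\theta(f_{\sigma(i)})\in[\theta(\beta_{\min}),\theta(f^\sigma)+\pi]\cup\{\bot\}$ for every $i$ with $q_\sigma\le i\le n$.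
   Context: A linear function is $f(x)=ax+b$; $\alpha(f)=a$, $\beta(f)=b$; nondecreasing means $a\ge0$, constant means $a=0$. $\vec f=(b,1-a)^\top$, $\theta(f)\in[0,2\pi)$ its polar angle, $\theta(f)=\bot$ if $\vec f=0$; for a real $c$, $\theta(c)$ is the polar angle of $(c,1)^\top$. $[\theta_1,\theta_2]_{2\pi}=\{\theta\in[\lambda_1,\lambda_2]\mid\lambda_1-\theta_1,\lambda_2-\theta_2\in2\pi\mathbb{Z},\ \lambda_2-\lambda_1\in[0,2\pi)\}$; $[\cdot,\cdot]$ without subscript is an ordinary real interval. $f^\sigma=f_{\sigma(n)}\circ\cdots\circ f_{\sigma(1)}$. For $1\le\ell\le m<r\le n$, $\sigma_{\ell,m,r}$ swaps the adjacent blocks $(\sigma(\ell),\dots,\sigma(m))$ and $(\sigma(m+1),\dots,\sigma(r))$ of $\sigma$; $\sigma$ is locally optimal if $f^\sigma\le f^{\sigma_{\ell,m,r}}$ for all such $\ell,m,r$. *)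

theory Defs
  imports "HOL-Analysis.Analysis"
begin

text \<open>A linear function f(x) = a x + b is given by its coefficients; a family
  f_1,...,f_n is given by coefficient maps alpha, beta :: nat => real on {1..n}.\<close>

definition lin :: "real \<Rightarrow> real \<Rightarrow> real \<Rightarrow> real" where
  "lin a b x = a * x + b"

fun comp_upto :: "(nat \<Rightarrow> real) \<Rightarrow> (nat \<Rightarrow> real) \<Rightarrow> (nat \<Rightarrow> nat) \<Rightarrow> nat \<Rightarrow> real \<Rightarrow> real" where
  "comp_upto \<alpha> \<beta> \<sigma> 0 x = x"
| "comp_upto \<alpha> \<beta> \<sigma> (Suc k) x = lin (\<alpha> (\<sigma> (Suc k))) (\<beta> (\<sigma> (Suc k))) (comp_upto \<alpha> \<beta> \<sigma> k x)"

definition fpow :: "(nat \<Rightarrow> real) \<Rightarrow> (nat \<Rightarrow> real) \<Rightarrow> nat \<Rightarrow> (nat \<Rightarrow> nat) \<Rightarrow> real \<Rightarrow> real" where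
  "fpow \<alpha> \<beta> n \<sigma> = comp_upto \<alpha> \<beta> \<sigma> n"

text \<open>sigma_{l,m,r}: swap adjacent blocks (sigma(l..m)) and (sigma(m+1..r)).\<close>
definition block_swap :: "(nat \<Rightarrow> nat) \<Rightarrow> nat \<Rightarrow> nat \<Rightarrow> nat \<Rightarrow> nat \<Rightarrow> nat" where
  "block_swap \<sigma> l m r i =
     (if i < l \<or> r < i then \<sigma> i
      else if i < l + (r - m) then \<sigma> (m + 1 + (i - l))
      else \<sigma> (l + (i - l - (r - m))))"

definition locally_optimal :: "(nat \<Rightarrow> real) \<Rightarrow> (nat \<Rightarrow> real) \<Rightarrow> nat \<Rightarrow> (nat \<Rightarrow> nat) \<Rightarrow> bool" where
  "locally_optimal \<alpha> \<beta> n \<sigma> \<longleftrightarrow>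
     (\<forall>l m r. 1 \<le> l \<and> l \<le> m \<and> m < r \<and> r \<le> n \<longrightarrow>
        (\<forall>x. fpow \<alpha> \<beta> n \<sigma> x \<le> fpow \<alpha> \<beta> n (block_swap \<sigma> l m r) x))"

definition polar_angle :: "real \<Rightarrow> real \<Rightarrow> real" where
  "polar_angle x y = (if 0 \<le> Arg (Complex x y) then Arg (Complex x y) else Arg (Complex x y) + 2 * pi)"

text \<open>theta(f) for f(x) = a x + b: polar angle of (b, 1 - a); None encodes bottom.\<close>
definition theta_lin :: "real \<Rightarrow> real \<Rightarrow> real option" where
  "theta_lin a b = (if b = 0 \<and> 1 - a = 0 then None else Some (polar_angle b (1 - a)))"

definition theta_const :: "real \<Rightarrow> real" where
  "theta_const c = polar_angle c 1"

definition cyc_interval :: "real \<Rightarrow> real \<Rightarrow> real set" where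
  "cyc_interval t1 t2 = {t. \<exists>l1 l2. l1 \<le> t \<and> t \<le> l2 \<and>
       (\<exists>k::int. l1 - t1 = 2 * pi * k) \<and> (\<exists>k::int. l2 - t2 = 2 * pi * k) \<and>
       0 \<le> l2 - l1 \<and> l2 - l1 < 2 * pi}"

end

theory Submission
  imports Defs
begin

lemma pa_rep:
  assumes "\<not> (x = 0 \<and> y = 0)"
  shows "\<exists>r>0. x = r * cos (polar_angle x y) \<and> y = r * sin (polar_angle x y)
          \<and> 0 \<le> polar_angle x y \<and> polar_angle x y < 2 * pi"
proof -
  let ?z = "Complex x y"
  have z: "?z \<noteq> 0" using assms by (simp add: complex_eq_iff)
  have e: "rcis (cmod ?z) (Arg ?z) = ?z" by (rule rcis_cmod_Arg)
  have x: "x = cmod ?z * cos (Arg ?z)" and y: "y = cmod ?z * sin (Arg ?z)"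
    using arg_cong[OF e, of Re] arg_cong[OF e, of Im] by (simp_all add: rcis_def cis.sel)
  have b: "- pi < Arg ?z" "Arg ?z \<le> pi" using Arg_bounded by auto
  show ?thesis
  proof (cases "0 \<le> Arg ?z")
    case True
    then show ?thesis using x y b z by (intro exI[of _ "cmod ?z"]) (auto simp: polar_angle_def)
  next
    case False
    have "cos (Arg ?z + 2*pi) = cos (Arg ?z)" "sin (Arg ?z + 2*pi) = sin (Arg ?z)"
      by (simp_all add: cos_add sin_add)
    then show ?thesis using x y b z False by (intro exI[of _ "cmod ?z"]) (auto simp: polar_angle_def)
  qed
qed

lemma sin_nonneg_range: "- pi < u \<Longrightarrow> u < 2*pi \<Longrightarrow> 0 \<le> sin u \<Longrightarrow> 0 \<le> u \<and> u \<le> pi"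
proof -
  assume a: "- pi < u" "u < 2*pi" "0 \<le> sin u"
  have "\<not> u < 0"
  proof
    assume "u < 0"
    hence "0 < sin (-u)" using a by (intro sin_gt_zero) auto
    thus False using a by simp
  qed
  moreover have "\<not> pi < u" using sin_lt_zero[of u] a by linarith
  ultimately show ?thesis by simp
qed

lemma sin_nonpos_range: "- pi < u \<Longrightarrow> u < 2*pi \<Longrightarrow> sin u \<le> 0 \<Longrightarrow> u \<le> 0 \<or> pi \<le> u"
proof -
  assume a: "sin u \<le> 0"
  show ?thesis
  proof (rule ccontr)
    assume "\<not> (u \<le> 0 \<or> pi \<le> u)"
    hence "0 < sin u" by (intro sin_gt_zero) auto
    thus False using a by simp
  qed
qed

lemma cross_sin:
  fixes x1 y1 x2 y2 p r s t :: real
  assumes "x1 = p * cos s" "y1 = p * sin s" "x2 = r * cos t" "y2 = r * sin t"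
  shows "x1 * y2 - y1 * x2 = p * r * sin (t - s)"
proof -
  have "x1 * y2 - y1 * x2 = p*r*(sin t * cos s - cos t * sin s)" unfolding assms by (simp add: right_diff_distrib mult_ac)
  also have "\<dots> = p * r * sin (t - s)" by (simp add: sin_diff)
  finally show ?thesis .
qed

lemma sgn_h1: "(0::real) < k \<Longrightarrow> 0 \<le> k * s \<Longrightarrow> 0 \<le> s" by (simp add: zero_le_mult_iff)
lemma sgn_h2: "(0::real) < k \<Longrightarrow> k * s \<le> 0 \<Longrightarrow> s \<le> 0" by (simp add: mult_le_0_iff)

lemma nz1: "\<not> (c = 0 \<and> (1::real) = 0)" by simp

lemma tc_range: "0 < theta_const c \<and> theta_const c < pi"
proof -
  obtain r where r: "r > 0" "c = r * cos (theta_const c)" "1 = r * sin (theta_const c)"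
    "0 \<le> theta_const c" "theta_const c < 2*pi"
    using pa_rep[OF nz1[of c]] unfolding theta_const_def by (elim exE conjE)
  have "0 < r * sin (theta_const c)" using r(3) by linarith
  hence s: "sin (theta_const c) > 0" using r(1) by (simp add: zero_less_mult_iff)
  have "\<not> pi \<le> theta_const c" using sin_le_zero[of "theta_const c"] r(5) s by linarith
  moreover have "theta_const c \<noteq> 0" using s by auto
  ultimately show ?thesis using r(4) by linarith
qed

lemma tc_rep: "\<exists>r>0. c = r * cos (theta_const c) \<and> r * sin (theta_const c) = 1"
proof -
  obtain r where r: "r>0" "c = r * cos (polar_angle c 1)" "1 = r * sin (polar_angle c 1)"
    using pa_rep[OF nz1[of c]] by (elim exE conjE)
  show ?thesis unfolding theta_const_def
    by (rule exI[of _ r]) (use r in simp)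
qed

lemma tc_mono: assumes "c \<le> b" shows "theta_const b \<le> theta_const c"
proof -
  obtain p where p0: "p>0" "b = p * cos (theta_const b)" "p * sin (theta_const b) = 1" using tc_rep[of b] by (elim exE conjE)
  note p = p0(1,2) p0(3)[symmetric]
  obtain r where r0: "r>0" "c = r * cos (theta_const c)" "r * sin (theta_const c) = 1" using tc_rep[of c] by (elim exE conjE)
  note r = r0(1,2) r0(3)[symmetric]
  have "b * 1 - 1 * c = p * r * sin (theta_const c - theta_const b)"
    by (rule cross_sin[OF p(2,3) r(2,3)])
  hence "0 \<le> p * r * sin (theta_const c - theta_const b)" using assms by simp
  hence "0 \<le> sin (theta_const c - theta_const b)" by (rule sgn_h1[OF mult_pos_pos[OF p(1) r(1)]])
  moreover have "- pi < theta_const c - theta_const b" "theta_const c - theta_const b < 2*pi"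
    using tc_range[of b] tc_range[of c] by auto
  ultimately show ?thesis using sin_nonneg_range[of "theta_const c - theta_const b"] by linarith
qed

lemma angle_iv:
  assumes cb: "c \<le> b0" and h: "(1-a)*b0 - b \<ge> 0 \<or> (1-a)*c - b \<ge> 0" and nz: "\<not> (b = 0 \<and> 1 - a = 0)"
  shows "polar_angle b (1-a) \<in> {theta_const b0 .. theta_const c + pi}"
proof -
  define t where "t = polar_angle b (1-a)"
  obtain r where r: "r>0" "b = r * cos t" "1-a = r * sin t" "0 \<le> t" "t < 2*pi"
    using pa_rep[OF nz] unfolding t_def by (elim exE conjE)
  obtain p where p0: "p>0" "b0 = p * cos (theta_const b0)" "p * sin (theta_const b0) = 1" using tc_rep[of b0] by (elim exE conjE)
  note p = p0(1,2) p0(3)[symmetric]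
  obtain s where s0: "s>0" "c = s * cos (theta_const c)" "s * sin (theta_const c) = 1" using tc_rep[of c] by (elim exE conjE)
  note s = s0(1,2) s0(3)[symmetric]
  have m: "theta_const b0 \<le> theta_const c" using tc_mono[OF cb] .
  have rb: "0 < theta_const b0" "theta_const b0 < pi" "0 < theta_const c" "theta_const c < pi"
    using tc_range by auto
  from h show ?thesis
  proof
    assume h1: "(1-a)*b0 - b \<ge> 0"
    have "b0 * (1-a) - 1 * b = p * r * sin (t - theta_const b0)" by (rule cross_sin[OF p(2,3) r(2,3)])
    hence "0 \<le> p * r * sin (t - theta_const b0)" using h1 by (simp add: mult.commute)
    hence "0 \<le> sin (t - theta_const b0)" by (rule sgn_h1[OF mult_pos_pos[OF p(1) r(1)]])
    hence "0 \<le> t - theta_const b0 \<and> t - theta_const b0 \<le> pi"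
      using sin_nonneg_range[of "t - theta_const b0"] rb r(4,5) by linarith
    then show ?thesis using m unfolding t_def[symmetric] by auto
  next
    assume h1: "(1-a)*c - b \<ge> 0"
    have "c * (1-a) - 1 * b = s * r * sin (t - theta_const c)" by (rule cross_sin[OF s(2,3) r(2,3)])
    hence "0 \<le> s * r * sin (t - theta_const c)" using h1 by (simp add: mult.commute)
    hence "0 \<le> sin (t - theta_const c)" by (rule sgn_h1[OF mult_pos_pos[OF s(1) r(1)]])
    hence "0 \<le> t - theta_const c \<and> t - theta_const c \<le> pi"
      using sin_nonneg_range[of "t - theta_const c"] rb r(4,5) by linarith
    then show ?thesis using m unfolding t_def[symmetric] by auto
  qed
qed

lemma angle_iii:
  assumes cb: "c \<le> b0" and h1: "b - (1-a)*b0 \<ge> 0" and h2: "b - (1-a)*c \<ge> 0"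
    and nz: "\<not> (b = 0 \<and> 1 - a = 0)"
  shows "polar_angle b (1-a) \<in> cyc_interval (theta_const c - pi) (theta_const b0)"
proof -
  define t where "t = polar_angle b (1-a)"
  obtain r where r: "r>0" "b = r * cos t" "1-a = r * sin t" "0 \<le> t" "t < 2*pi"
    using pa_rep[OF nz] unfolding t_def by (elim exE conjE)
  obtain p where p0: "p>0" "b0 = p * cos (theta_const b0)" "p * sin (theta_const b0) = 1" using tc_rep[of b0] by (elim exE conjE)
  note p = p0(1,2) p0(3)[symmetric]
  obtain s where s0: "s>0" "c = s * cos (theta_const c)" "s * sin (theta_const c) = 1" using tc_rep[of c] by (elim exE conjE)
  note s = s0(1,2) s0(3)[symmetric]
  have m: "theta_const b0 \<le> theta_const c" using tc_mono[OF cb] .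
  have rb: "0 < theta_const b0" "theta_const b0 < pi" "0 < theta_const c" "theta_const c < pi"
    using tc_range by auto
  have "b0 * (1-a) - 1 * b = p * r * sin (t - theta_const b0)" by (rule cross_sin[OF p(2,3) r(2,3)])
  hence "p * r * sin (t - theta_const b0) \<le> 0" using h1 by (simp add: mult.commute)
  hence "sin (t - theta_const b0) \<le> 0" by (rule sgn_h2[OF mult_pos_pos[OF p(1) r(1)]])
  hence A: "t - theta_const b0 \<le> 0 \<or> pi \<le> t - theta_const b0"
    using sin_nonpos_range[of "t - theta_const b0"] rb r(4,5) by linarith
  have "c * (1-a) - 1 * b = s * r * sin (t - theta_const c)" by (rule cross_sin[OF s(2,3) r(2,3)])
  hence "s * r * sin (t - theta_const c) \<le> 0" using h2 by (simp add: mult.commute)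
  hence "sin (t - theta_const c) \<le> 0" by (rule sgn_h2[OF mult_pos_pos[OF s(1) r(1)]])
  hence B: "t - theta_const c \<le> 0 \<or> pi \<le> t - theta_const c"
    using sin_nonpos_range[of "t - theta_const c"] rb r(4,5) by linarith
  have "t \<le> theta_const b0 \<or> theta_const c + pi \<le> t" using A B m rb by linarith
  then have "t \<in> cyc_interval (theta_const c - pi) (theta_const b0)"
  proof
    assume "t \<le> theta_const b0"
    moreover have "\<exists>k::int. (theta_const c - pi) - (theta_const c - pi) = 2 * pi * k" by (rule exI[of _ 0]) simp
    moreover have "\<exists>k::int. theta_const b0 - theta_const b0 = 2 * pi * k" by (rule exI[of _ 0]) simp
    ultimately show ?thesis unfolding cyc_interval_def mem_Collect_eq using r(4,5) m rb
      apply -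
      apply (rule exI[of _ "theta_const c - pi"])
      apply (rule exI[of _ "theta_const b0"])
      apply (intro conjI)
      apply (assumption | linarith)+
      done
  next
    assume "theta_const c + pi \<le> t"
    moreover have "\<exists>k::int. (theta_const c + pi) - (theta_const c - pi) = 2 * pi * k" by (rule exI[of _ 1]) simp
    moreover have "\<exists>k::int. (theta_const b0 + 2*pi) - theta_const b0 = 2 * pi * k" by (rule exI[of _ 1]) simp
    ultimately show ?thesis unfolding cyc_interval_def mem_Collect_eq using r(4,5) m rb
      apply -
      apply (rule exI[of _ "theta_const c + pi"])
      apply (rule exI[of _ "theta_const b0 + 2*pi"])
      apply (intro conjI)
      apply (assumption | linarith)+
      done
  qed
  then show ?thesis unfolding t_def .
qed



fun seg :: "(nat \<Rightarrow> real) \<Rightarrow> (nat \<Rightarrow> real) \<Rightarrow> (nat \<Rightarrow> nat) \<Rightarrow> nat \<Rightarrow> nat \<Rightarrow> real \<Rightarrow> real" where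
  "seg \<alpha> \<beta> \<tau> j 0 x = x"
| "seg \<alpha> \<beta> \<tau> j (Suc d) x = lin (\<alpha> (\<tau> (j + Suc d))) (\<beta> (\<tau> (j + Suc d))) (seg \<alpha> \<beta> \<tau> j d x)"

lemma comp_seg: "comp_upto \<alpha> \<beta> \<tau> k x = seg \<alpha> \<beta> \<tau> 0 k x"
  by (induction k) auto

lemma seg_split: "seg \<alpha> \<beta> \<tau> j (d1 + d2) x = seg \<alpha> \<beta> \<tau> (j + d1) d2 (seg \<alpha> \<beta> \<tau> j d1 x)"
  by (induction d2) (auto simp: add_ac)

lemma seg_split_gen: "i \<le> j \<Longrightarrow> j \<le> k \<Longrightarrow>
   seg \<alpha> \<beta> \<tau> i (k - i) x = seg \<alpha> \<beta> \<tau> j (k - j) (seg \<alpha> \<beta> \<tau> i (j - i) x)"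
  using seg_split[of \<alpha> \<beta> \<tau> i "j - i" "k - j" x] by simp

lemma seg_cong: "(\<forall>e<d. \<tau> (j + Suc e) = \<tau>' (j' + Suc e)) \<Longrightarrow> seg \<alpha> \<beta> \<tau> j d x = seg \<alpha> \<beta> \<tau>' j' d x"
  by (induction d) auto

lemma seg_one: "seg \<alpha> \<beta> \<tau> j 1 x = lin (\<alpha> (\<tau> (Suc j))) (\<beta> (\<tau> (Suc j))) x"
  by simp

lemma seg_through:
  assumes "j < q" "q \<le> j + d" "\<alpha> (\<tau> q) = 0"
  shows "seg \<alpha> \<beta> \<tau> j d z = seg \<alpha> \<beta> \<tau> q (j + d - q) (\<beta> (\<tau> q))"
proof -
  have "seg \<alpha> \<beta> \<tau> j ((q - j) + (j + d - q)) z = seg \<alpha> \<beta> \<tau> q (j + d - q) (seg \<alpha> \<beta> \<tau> j (q - j) z)"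
    using seg_split[of \<alpha> \<beta> \<tau> j "q - j" "j + d - q" z] assms by simp
  moreover have "seg \<alpha> \<beta> \<tau> j (q - j) z = \<beta> (\<tau> q)"
  proof -
    obtain e where e: "q - j = Suc e" using assms by (metis Suc_diff_Suc)
    have "j + Suc e = q" using e assms by simp
    then show ?thesis using e assms by (simp add: lin_def)
  qed
  moreover have "(q - j) + (j + d - q) = d" using assms by simp
  ultimately show ?thesis by simp
qed

lemma seg_strict: "(\<forall>e<d. 0 < \<alpha> (\<tau> (j + Suc e))) \<Longrightarrow> x < y \<Longrightarrow> seg \<alpha> \<beta> \<tau> j d x < seg \<alpha> \<beta> \<tau> j d y"
  by (induction d) (auto simp: lin_def)

lemma seg_le_rev: "(\<forall>e<d. 0 < \<alpha> (\<tau> (j + Suc e))) \<Longrightarrow> seg \<alpha> \<beta> \<tau> j d x \<le> seg \<alpha> \<beta> \<tau> j d y \<Longrightarrow> x \<le> y"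
  using seg_strict[of d \<alpha> \<tau> j y x \<beta>] by force

lemma swap_ineq:
  assumes lo: "locally_optimal \<alpha> \<beta> n \<sigma>" and a: "1 \<le> l" "l \<le> m" "m < r" "r \<le> n"
  shows "seg \<alpha> \<beta> \<sigma> r (n-r) (seg \<alpha> \<beta> \<sigma> m (r-m) (seg \<alpha> \<beta> \<sigma> (l-1) (m-(l-1)) (seg \<alpha> \<beta> \<sigma> 0 (l-1) x)))
     \<le> seg \<alpha> \<beta> \<sigma> r (n-r) (seg \<alpha> \<beta> \<sigma> (l-1) (m-(l-1)) (seg \<alpha> \<beta> \<sigma> m (r-m) (seg \<alpha> \<beta> \<sigma> 0 (l-1) x)))"
proof -
  define \<tau> where "\<tau> = block_swap \<sigma> l m r"
  have le: "fpow \<alpha> \<beta> n \<sigma> x \<le> fpow \<alpha> \<beta> n \<tau> x" using lo a unfolding locally_optimal_def \<tau>_def by blast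
  have o: "seg \<alpha> \<beta> \<sigma> 0 n x = seg \<alpha> \<beta> \<sigma> r (n-r) (seg \<alpha> \<beta> \<sigma> m (r-m) (seg \<alpha> \<beta> \<sigma> (l-1) (m-(l-1)) (seg \<alpha> \<beta> \<sigma> 0 (l-1) x)))"
    using seg_split_gen[of 0 r n \<alpha> \<beta> \<sigma> x] seg_split_gen[of 0 m r \<alpha> \<beta> \<sigma> x]
      seg_split_gen[of 0 "l-1" m \<alpha> \<beta> \<sigma> x] a by simp
  define k where "k = l - 1 + (r - m)"
  have k: "k \<le> r" "r - k = m - (l-1)" "k - (l-1) = r - m" using a by (auto simp: k_def)
  have s: "seg \<alpha> \<beta> \<tau> 0 n x = seg \<alpha> \<beta> \<tau> r (n-r) (seg \<alpha> \<beta> \<tau> k (m-(l-1)) (seg \<alpha> \<beta> \<tau> (l-1) (r-m) (seg \<alpha> \<beta> \<tau> 0 (l-1) x)))"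
    using seg_split_gen[of 0 r n \<alpha> \<beta> \<tau> x] seg_split_gen[of 0 k r \<alpha> \<beta> \<tau> x]
      seg_split_gen[of 0 "l-1" k \<alpha> \<beta> \<tau> x] a k by (simp add: k_def)
  have c1: "seg \<alpha> \<beta> \<tau> r (n-r) z = seg \<alpha> \<beta> \<sigma> r (n-r) z" for z
    by (rule seg_cong) (auto simp: \<tau>_def block_swap_def)
  have c2: "seg \<alpha> \<beta> \<tau> k (m-(l-1)) z = seg \<alpha> \<beta> \<sigma> (l-1) (m-(l-1)) z" for z
  proof (rule seg_cong, intro allI impI)
    fix e assume "e < m - (l-1)"
    then show "\<tau> (k + Suc e) = \<sigma> (l - 1 + Suc e)" using a
      by (auto simp: \<tau>_def block_swap_def k_def)
  qed
  have c3: "seg \<alpha> \<beta> \<tau> (l-1) (r-m) z = seg \<alpha> \<beta> \<sigma> m (r-m) z" for z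
  proof (rule seg_cong, intro allI impI)
    fix e assume "e < r - m"
    then show "\<tau> (l - 1 + Suc e) = \<sigma> (m + Suc e)" using a
      by (auto simp: \<tau>_def block_swap_def)
  qed
  have c4: "seg \<alpha> \<beta> \<tau> 0 (l-1) x = seg \<alpha> \<beta> \<sigma> 0 (l-1) x"
    by (rule seg_cong) (auto simp: \<tau>_def block_swap_def)
  show ?thesis using le o s c1 c2 c3 c4 by (simp add: fpow_def comp_seg)
qed

lemma dec_chain: "(\<forall>d. d < N \<longrightarrow> (Y (Suc d) :: real) \<le> Y d) \<Longrightarrow> d \<le> d' \<Longrightarrow> d' \<le> N \<Longrightarrow> Y d' \<le> Y d"
proof (induction d')
  case 0 then show ?case by simp
next
  case (Suc d')
  show ?case
  proof (cases "d = Suc d'")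
    case False
    then have "Y d' \<le> Y d" using Suc by simp
    moreover have "Y (Suc d') \<le> Y d'" using Suc by simp
    ultimately show ?thesis by simp
  qed simp
qed

lemma lin_endpoint:
  fixes a b c y B :: real
  assumes "c \<le> y" "y \<le> B" "a*y + b \<le> y"
  shows "(1-a)*B - b \<ge> 0 \<or> (1-a)*c - b \<ge> 0"
proof (cases "0 \<le> 1 - a")
  case True
  have "(1-a)*y \<le> (1-a)*B" using True assms by (intro mult_left_mono) auto
  then show ?thesis using assms by (auto simp: algebra_simps)
next
  case False
  have "(1-a)*y \<le> (1-a)*c" using False assms by (intro mult_left_mono_neg) auto
  then show ?thesis using assms by (auto simp: algebra_simps)
qed

theorem mainTheorem18:
  fixes \<alpha> \<beta> :: "nat \<Rightarrow> real" and n :: nat and \<sigma> :: "nat \<Rightarrow> nat"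
  assumes nondec: "\<forall>i\<in>{1..n}. 0 \<le> \<alpha> i"
    and const_ex: "\<exists>i\<in>{1..n}. \<alpha> i = 0"
    and perm: "\<sigma> permutes {1..n}"
    and locopt: "locally_optimal \<alpha> \<beta> n \<sigma>"
  defines "\<beta>min \<equiv> Min {\<beta> i | i. i \<in> {1..n} \<and> \<alpha> i = 0}"
    and "q \<equiv> Max {q \<in> {1..n}. \<alpha> (\<sigma> q) = 0}"
    and "c \<equiv> fpow \<alpha> \<beta> n \<sigma> 0"
  shows "(\<forall>x. fpow \<alpha> \<beta> n \<sigma> x = c)
    \<and> c \<le> \<beta>min
    \<and> \<alpha> (\<sigma> q) = 0 \<and> \<beta> (\<sigma> q) = \<beta>min
    \<and> (\<forall>i\<in>{1..q}. theta_lin (\<alpha> (\<sigma> i)) (\<beta> (\<sigma> i)) = None \<or>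
          (\<exists>t. theta_lin (\<alpha> (\<sigma> i)) (\<beta> (\<sigma> i)) = Some t \<and>
               t \<in> cyc_interval (theta_const c - pi) (theta_const \<beta>min)))
    \<and> (\<forall>i\<in>{q..n}. theta_lin (\<alpha> (\<sigma> i)) (\<beta> (\<sigma> i)) = None \<or>
          (\<exists>t. theta_lin (\<alpha> (\<sigma> i)) (\<beta> (\<sigma> i)) = Some t \<and>
               t \<in> {theta_const \<beta>min .. theta_const c + pi}))"
proof -
  let ?S = "seg \<alpha> \<beta> \<sigma>"
  let ?f = "\<lambda>i. lin (\<alpha> (\<sigma> i)) (\<beta> (\<sigma> i))"
  have sig_in: "\<sigma> i \<in> {1..n}" if "i \<in> {1..n}" for i
    using permutes_in_image[OF perm, of i] that by blast
  have anon: "0 \<le> \<alpha> (\<sigma> i)" if "i \<in> {1..n}" for i using sig_in[OF that] nondec by blast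
  define Q where "Q = {q \<in> {1..n}. \<alpha> (\<sigma> q) = 0}"
  have Qfin: "finite Q" unfolding Q_def by simp
  obtain j where j: "j \<in> {1..n}" "\<alpha> j = 0" using const_ex by blast
  have "j \<in> \<sigma> ` {1..n}" using j perm by (simp add: permutes_image)
  then obtain p where p: "p \<in> {1..n}" "\<sigma> p = j" by blast
  have "p \<in> Q" using p j unfolding Q_def by simp
  hence Qne: "Q \<noteq> {}" by blast
  have qQ: "q \<in> Q" unfolding q_def Q_def[symmetric] using Qfin Qne by simp
  have q1: "1 \<le> q" "q \<le> n" and aq: "\<alpha> (\<sigma> q) = 0" using qQ unfolding Q_def by auto
  have qmax: "p \<le> q" if "p \<in> Q" for p unfolding q_def Q_def[symmetric] using Qfin that by simp
  have apos: "0 < \<alpha> (\<sigma> k)" if "q < k" "k \<le> n" for k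
  proof -
    have "k \<notin> Q" using qmax that by fastforce
    hence "\<alpha> (\<sigma> k) \<noteq> 0" using that q1 unfolding Q_def by auto
    moreover have "0 \<le> \<alpha> (\<sigma> k)" using anon that q1 by simp
    ultimately show ?thesis by simp
  qed
  have posseg: "\<forall>e<d. 0 < \<alpha> (\<sigma> (j' + Suc e))" if "q \<le> j'" "j' + d \<le> n" for j' d
    using apos that by simp
  define bq where "bq = \<beta> (\<sigma> q)"
  define Y where "Y d = ?S q d bq" for d
  have fp: "fpow \<alpha> \<beta> n \<sigma> x = Y (n - q)" for x
  proof -
    have "fpow \<alpha> \<beta> n \<sigma> x = ?S 0 n x" by (simp add: fpow_def comp_seg)
    also have "\<dots> = ?S q (0 + n - q) bq" unfolding bq_def by (rule seg_through) (use q1 aq in auto)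
    finally show ?thesis by (simp add: Y_def)
  qed
  have cY: "c = Y (n - q)" unfolding c_def by (rule fp)
  have part1: "\<forall>x. fpow \<alpha> \<beta> n \<sigma> x = c" using fp cY by simp
  have A: "bq \<le> ?f i bq" if "1 \<le> i" "i < q" for i
  proof -
    have "?S q (n-q) (?S i (q-i) (?S (i-1) (i-(i-1)) (?S 0 (i-1) 0)))
       \<le> ?S q (n-q) (?S (i-1) (i-(i-1)) (?S i (q-i) (?S 0 (i-1) 0)))"
      by (rule swap_ineq[OF locopt]) (use that q1 in auto)
    moreover have "?S i (q-i) z = bq" for z
      using seg_through[of i q "q-i" \<alpha> \<sigma> \<beta> z] that aq by (simp add: bq_def)
    moreover have "i - (i-1) = 1" using that by simp
    moreover have "Suc (i - 1) = i" using that by simp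
    ultimately have "?S q (n-q) bq \<le> ?S q (n-q) (?f i bq)" by simp
    moreover have posA: "\<forall>e<n-q. 0 < \<alpha> (\<sigma> (q + Suc e))" using posseg[of q "n-q"] q1 by simp
    ultimately show ?thesis using seg_le_rev[of "n-q" \<alpha> \<sigma> q \<beta>, OF posA] by blast
  qed
  have B: "c \<le> ?f i c" if "1 \<le> i" "i < q" for i
  proof -
    have "?S n (n-n) (?S i (n-i) (?S (i-1) (i-(i-1)) (?S 0 (i-1) 0)))
       \<le> ?S n (n-n) (?S (i-1) (i-(i-1)) (?S i (n-i) (?S 0 (i-1) 0)))"
      by (rule swap_ineq[OF locopt]) (use that q1 in auto)
    moreover have "?S i (n-i) z = c" for z
      using seg_through[of i q "n-i" \<alpha> \<sigma> \<beta> z] that aq q1 by (simp add: bq_def cY Y_def)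
    moreover have "i - (i-1) = 1" using that by simp
    moreover have "Suc (i - 1) = i" using that by simp
    ultimately show ?thesis by simp
  qed
  have C: "c \<le> bq"
  proof (cases "q < n")
    case True
    have "?S n (n-n) (?S q (n-q) (?S (q-1) (q-(q-1)) (?S 0 (q-1) 0)))
       \<le> ?S n (n-n) (?S (q-1) (q-(q-1)) (?S q (n-q) (?S 0 (q-1) 0)))"
      by (rule swap_ineq[OF locopt]) (use True q1 in auto)
    moreover have "q - (q-1) = 1" "Suc (q - 1) = q" using q1 by auto
    ultimately show ?thesis using aq by (simp add: lin_def cY Y_def bq_def)
  next
    case False
    then show ?thesis using q1 by (simp add: cY Y_def)
  qed
  have D: "Y (Suc d) \<le> Y d" if "q + Suc d \<le> n" for d
  proof -
    let ?m = "q + d" and ?r = "q + Suc d"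
    have "?S ?r (n-?r) (?S ?m (?r-?m) (?S (q-1) (?m-(q-1)) (?S 0 (q-1) 0)))
       \<le> ?S ?r (n-?r) (?S (q-1) (?m-(q-1)) (?S ?m (?r-?m) (?S 0 (q-1) 0)))"
      by (rule swap_ineq[OF locopt]) (use that q1 in auto)
    moreover have "?S (q-1) (?m-(q-1)) z = Y d" for z
      using seg_through[of "q-1" q "?m-(q-1)" \<alpha> \<sigma> \<beta> z] aq q1 by (simp add: bq_def Y_def)
    moreover have "?r - ?m = 1" by simp
    moreover have "?S ?m 1 (Y d) = Y (Suc d)" by (simp add: Y_def)
    ultimately have "?S ?r (n-?r) (Y (Suc d)) \<le> ?S ?r (n-?r) (Y d)" by simp
    moreover have posA: "\<forall>e<n-?r. 0 < \<alpha> (\<sigma> (?r + Suc e))" using posseg[of ?r "n-?r"] that by simp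
    ultimately show ?thesis using seg_le_rev[of "n-?r" \<alpha> \<sigma> ?r \<beta>, OF posA] by blast
  qed
  have Ydec: "Y d' \<le> Y d" if "d \<le> d'" "d' \<le> n - q" for d d'
    by (rule dec_chain[of "n-q" Y]) (use D that q1 in auto)
  have Ybnd: "c \<le> Y d \<and> Y d \<le> bq" if "d \<le> n - q" for d
    using Ydec[of d "n-q"] Ydec[of 0 d] that cY by (simp add: Y_def)
  define BS where "BS = {\<beta> i | i. i \<in> {1..n} \<and> \<alpha> i = 0}"
  have BSfin: "finite BS" unfolding BS_def by simp
  have bqBS: "bq \<in> BS" unfolding BS_def bq_def using sig_in[of q] q1 aq by auto
  have bqle: "bq \<le> x" if xin: "x \<in> BS" for x
  proof -
    obtain j where j: "x = \<beta> j" "j \<in> {1..n}" "\<alpha> j = 0" using xin unfolding BS_def by blast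
    have "j \<in> \<sigma> ` {1..n}" using j perm by (simp add: permutes_image)
    then obtain p where p: "p \<in> {1..n}" "\<sigma> p = j" by blast
    have "p \<le> q" using qmax p j unfolding Q_def by simp
    show ?thesis
    proof (cases "p = q")
      case True then show ?thesis using p j by (simp add: bq_def)
    next
      case False
      hence "bq \<le> ?f p bq" using A[of p] p \<open>p \<le> q\<close> by simp
      then show ?thesis using p j by (simp add: lin_def)
    qed
  qed
  have bmin: "\<beta>min = bq" unfolding \<beta>min_def BS_def[symmetric]
    using BSfin bqBS bqle by (intro Min_eqI) auto
  have part3: "theta_lin (\<alpha> (\<sigma> i)) (\<beta> (\<sigma> i)) = None \<or>
          (\<exists>t. theta_lin (\<alpha> (\<sigma> i)) (\<beta> (\<sigma> i)) = Some t \<and>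
               t \<in> cyc_interval (theta_const c - pi) (theta_const \<beta>min))" if i: "i \<in> {1..q}" for i
  proof -
    let ?a = "\<alpha> (\<sigma> i)" and ?b = "\<beta> (\<sigma> i)"
    have h: "?b - (1 - ?a) * bq \<ge> 0 \<and> ?b - (1 - ?a) * c \<ge> 0"
    proof (cases "i = q")
      case True then show ?thesis using aq C by (simp add: bq_def)
    next
      case False
      hence "bq \<le> ?f i bq" "c \<le> ?f i c" using A B i by auto
      then show ?thesis by (simp add: lin_def algebra_simps)
    qed
    show ?thesis
    proof (cases "?b = 0 \<and> 1 - ?a = 0")
      case True then show ?thesis by (simp add: theta_lin_def)
    next
      case False
      have "polar_angle ?b (1 - ?a) \<in> cyc_interval (theta_const c - pi) (theta_const bq)"
        using angle_iii[OF C _ _ False] h by simp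
      then show ?thesis using False bmin by (simp add: theta_lin_def)
    qed
  qed
  have part4: "theta_lin (\<alpha> (\<sigma> i)) (\<beta> (\<sigma> i)) = None \<or>
          (\<exists>t. theta_lin (\<alpha> (\<sigma> i)) (\<beta> (\<sigma> i)) = Some t \<and>
               t \<in> {theta_const \<beta>min .. theta_const c + pi})" if i: "i \<in> {q..n}" for i
  proof -
    let ?a = "\<alpha> (\<sigma> i)" and ?b = "\<beta> (\<sigma> i)"
    have h: "(1 - ?a) * bq - ?b \<ge> 0 \<or> (1 - ?a) * c - ?b \<ge> 0"
    proof (cases "i = q")
      case True then show ?thesis using aq by (simp add: bq_def)
    next
      case False
      have "q < i" using False i by simp
      then obtain d where d0: "i = Suc (q + d)" using less_imp_Suc_add[of q i] by blast
      hence d: "i = q + Suc d" by simp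
      have dn: "q + Suc d \<le> n" using i d by simp
      have "Y (Suc d) = ?f i (Y d)" using d by (simp add: Y_def)
      hence yy: "?a * Y d + ?b \<le> Y d" using D[OF dn] by (simp add: lin_def)
      have y1: "c \<le> Y d" and y2: "Y d \<le> bq" using Ybnd[of d] dn by auto
      show ?thesis using lin_endpoint[OF y1 y2 yy] .
    qed
    show ?thesis
    proof (cases "?b = 0 \<and> 1 - ?a = 0")
      case True then show ?thesis by (simp add: theta_lin_def)
    next
      case False
      have "polar_angle ?b (1 - ?a) \<in> {theta_const bq .. theta_const c + pi}"
        using angle_iv[OF C h False] .
      then show ?thesis using False bmin by (simp add: theta_lin_def)
    qed
  qed
  show ?thesis using part1 C bmin aq part3 part4 by (simp add: bq_def)
qed

end
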